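(* Let $(S,\mathcal{D}_S)$ be an $(n,\delta)$-indexing algorithm over alphabet $\Sigma_S$ with at most $k$ misdecodings. Let $c\in\Sigma_{\mathcal C}^n$ be any codeword, sent via the indexing procedure. Then for every corruption consisting of at most $n\delta$ insertions and deletions, the string $m'\in(\Sigma_{\mathcal C}\cup\{?\})^n$ produced by the indexing procedure has half-error distance at most $n\delta+2k$ from $c$. If moreover $(S,\mathcal{D}_S)$ is error-free, this half-error distance is at most $n\delta+k$.
   Context: Indexing problem. Fix $n$, $\delta$, and a string $S\in\Sigma_S^n$. An adversary applies at most $n\delta$ insertions and deletions to $S$, yielding a received string $S_\tau$; this is described by an order-preserving alignment in which each symbol $S[i]$ is either deleted or delivered unchanged as a unique symbol $S_\tau[j]$, and each symbol of $S_\tau$ is either delivered from a unique $S[i]$ or inserted. Position $j$ of $S_\tau$ is successfully transmitted if it was delivered from some $S[i]$; it is then correctly decoded if the algorithm outputs $i$ for it. An $(n,\delta)$-indexing algorithm $(S,\mathcal D_S)$ consists of $S$ and an algorithm $\mathcal D_S$ which, for any such corruption, outputs for every position of $S_\tau$ either $\bot$ or an index in $\{1,\dots,n\}$. It has at most $k$ misdecodings if for every corruption with at most $n\delta$ insertions and deletions, at most $k$ successfully transmitted positions are not correctly decoded (a $\bot$ output counts as not correctly decoded). It is error-free if every non-$\bot$ output is correct, i.e., it never outputs an index other than the true origin index of a successfully transmitted symbol (and outputs $\bot$ for inserted symbols). Indexing procedure: given a codeword $c\in\Sigma_{\mathcal C}^n$, the sender transmits the string over $\Sigma_{\mathcal C}\times\Sigma_S$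 whose $i$-th symbol is $(c[i],S[i])$. The channel applies at most $n\delta$ insertions and deletions. The receiver applies $\mathcal D_S$ to the sequence of second components of the received string; then for each $i\in\{1,\dots,n\}$, if exactly one received position $j$ was assigned index $i$, it sets $m'_i$ to the first component of the $j$-th received symbol, and otherwise sets $m'_i=?$ (an erasure). Half-error distance between $c$ and $m'$: the number of $i$ with $m'_i=?$ plus twice the number of $i$ with $m'_i\neq ?$ and $m'_i\neq c[i]$. *)

theory Defs
  imports Complex_Main
begin

text \<open>Conventions: strings are lists; positions and indices are 0-based
  (the paper's index i in 1..n corresponds to i-1 here).  A decoder output
  None stands for the symbol bottom.\<close>

text \<open>An order-preserving alignment A between x and y: each pair (i,j) in A
  says that x!i is delivered unchanged as y!j.\<close>
definition alignment :: "'a list \<Rightarrow> 'a list \<Rightarrow> (nat \<times> nat) set \<Rightarrow> bool" where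
  "alignment x y A \<longleftrightarrow>
     A \<subseteq> {..<length x} \<times> {..<length y} \<and>
     (\<forall>(i,j)\<in>A. \<forall>(i',j')\<in>A. i < i' \<longleftrightarrow> j < j') \<and>
     (\<forall>(i,j)\<in>A. y ! j = x ! i)"

definition num_edits :: "'a list \<Rightarrow> 'a list \<Rightarrow> (nat \<times> nat) set \<Rightarrow> nat" where
  "num_edits x y A = (length x - card A) + (length y - card A)"

definition corruption :: "real \<Rightarrow> 'a list \<Rightarrow> 'a list \<Rightarrow> (nat \<times> nat) set \<Rightarrow> bool" where
  "corruption bud x y A \<longleftrightarrow> alignment x y A \<and> real (num_edits x y A) \<le> bud"

definition indexing_algorithm ::
  "nat \<Rightarrow> real \<Rightarrow> 's list \<Rightarrow> ('s list \<Rightarrow> nat \<Rightarrow> nat option) \<Rightarrow> bool" where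
  "indexing_algorithm n \<delta> S D \<longleftrightarrow> length S = n \<and>
     (\<forall>y A. corruption (real n * \<delta>) S y A \<longrightarrow>
        (\<forall>j < length y. D y j = None \<or> (\<exists>i < n. D y j = Some i)))"

definition at_most_misdecodings ::
  "nat \<Rightarrow> real \<Rightarrow> 's list \<Rightarrow> ('s list \<Rightarrow> nat \<Rightarrow> nat option) \<Rightarrow> nat \<Rightarrow> bool" where
  "at_most_misdecodings n \<delta> S D k \<longleftrightarrow>
     (\<forall>y A. corruption (real n * \<delta>) S y A \<longrightarrow>
        card {j. \<exists>i. (i, j) \<in> A \<and> D y j \<noteq> Some i} \<le> k)"

definition error_free ::
  "nat \<Rightarrow> real \<Rightarrow> 's list \<Rightarrow> ('s list \<Rightarrow> nat \<Rightarrow> nat option) \<Rightarrow> bool" where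
  "error_free n \<delta> S D \<longleftrightarrow>
     (\<forall>y A. corruption (real n * \<delta>) S y A \<longrightarrow>
        (\<forall>j < length y. D y j \<noteq> None \<longrightarrow> (\<exists>i. (i, j) \<in> A \<and> D y j = Some i)))"

definition indexing_send :: "'c list \<Rightarrow> 's list \<Rightarrow> ('c \<times> 's) list" where
  "indexing_send c S = zip c S"

text \<open>Receiver of the indexing procedure: m'_i = Some (first component of the
  unique received position assigned index i), or None (erasure '?').\<close>
definition indexing_receive ::
  "nat \<Rightarrow> ('s list \<Rightarrow> nat \<Rightarrow> nat option) \<Rightarrow> ('c \<times> 's) list \<Rightarrow> 'c option list" where
  "indexing_receive n D R =
     map (\<lambda>i. let J = {j. j < length R \<and> D (map snd R) j = Some i} in
               if card J = 1 then Some (fst (R ! (THE j. j \<in> J))) else None) [0..<n]"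

definition half_error_distance :: "'c list \<Rightarrow> 'c option list \<Rightarrow> nat" where
  "half_error_distance c m =
     card {i. i < length c \<and> m ! i = None}
     + 2 * card {i. i < length c \<and> m ! i \<noteq> None \<and> m ! i \<noteq> Some (c ! i)}"

end

theory Submission
  imports Defs
begin

lemma align_inj:
  assumes "alignment x y A" "(i,j) \<in> A" "(i',j') \<in> A"
  shows "(i = i') = (j = j')"
proof -
  have o: "\<forall>(i,j)\<in>A. \<forall>(i',j')\<in>A. i < i' \<longleftrightarrow> j < j'" using assms(1) unfolding alignment_def by blast
  have "i < i' \<longleftrightarrow> j < j'" "i' < i \<longleftrightarrow> j' < j" using o assms(2,3) by fast+
  then show ?thesis by (meson linorder_neqE_nat order_less_irrefl)
qed

theorem theorem10:
  fixes n k :: nat and \<delta> :: real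
    and S :: "'s list" and D :: "'s list \<Rightarrow> nat \<Rightarrow> nat option"
    and c :: "'c list" and R :: "('c \<times> 's) list" and A :: "(nat \<times> nat) set"
  assumes "indexing_algorithm n \<delta> S D"
    and "at_most_misdecodings n \<delta> S D k"
    and "length c = n"
    and "corruption (real n * \<delta>) (indexing_send c S) R A"
  shows "real (half_error_distance c (indexing_receive n D R)) \<le> real n * \<delta> + 2 * real k
         \<and> (error_free n \<delta> S D \<longrightarrow>
              real (half_error_distance c (indexing_receive n D R)) \<le> real n * \<delta> + real k)"
proof -
  have lS: "length S = n" using assms(1) unfolding indexing_algorithm_def by simp
  have lz: "length (zip c S) = n" using lS assms(3) by simp
  define y where "y = map snd R"
  define m where "m = indexing_receive n D R"
  have al: "alignment (zip c S) R A" and bud: "real (num_edits (zip c S) R A) \<le> real n * \<delta>"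
    using assms(4) unfolding corruption_def indexing_send_def by auto
  have Asub: "A \<subseteq> {..<n} \<times> {..<length R}" using al lz unfolding alignment_def by auto
  have Aeq: "\<And>i j. (i,j) \<in> A \<Longrightarrow> R ! j = zip c S ! i" using al unfolding alignment_def by auto
  have inj: "\<And>i j i' j'. (i,j) \<in> A \<Longrightarrow> (i',j') \<in> A \<Longrightarrow> (i = i') = (j = j')"
    using align_inj[OF al] by blast
  have finA: "finite A" using Asub by (rule finite_subset) auto
  have alS: "alignment S y A"
    unfolding alignment_def
  proof (intro conjI)
    show "A \<subseteq> {..<length S} \<times> {..<length y}" using Asub lS y_def by auto
    show "\<forall>(i,j)\<in>A. \<forall>(i',j')\<in>A. i < i' \<longleftrightarrow> j < j'" using al unfolding alignment_def by blast
    show "\<forall>(i,j)\<in>A. y ! j = S ! i"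
    proof (clarify)
      fix i j assume ij: "(i,j) \<in> A"
      then have "i < n" "j < length R" using Asub by auto
      then show "y ! j = S ! i" using Aeq[OF ij] y_def lS assms(3) by simp
    qed
  qed
  have corrS: "corruption (real n * \<delta>) S y A"
    unfolding corruption_def using alS bud lS lz y_def unfolding num_edits_def by simp
  define Mis where "Mis = {j. \<exists>i. (i, j) \<in> A \<and> D y j \<noteq> Some i}"
  have cMis: "card Mis \<le> k" using assms(2) corrS unfolding at_most_misdecodings_def Mis_def by blast
  have "Mis \<subseteq> snd ` A" unfolding Mis_def by force
  then have finMis: "finite Mis" using finA by (meson finite_imageI finite_subset)
  define Del where "Del = {..<n} - fst ` A"
  define Ins where "Ins = {..<length R} - snd ` A"
  define B where "B = {j. j < length R \<and> D y j \<noteq> None \<and> \<not>(\<exists>i. (i,j)\<in>A \<and> D y j = Some i)}"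
  define OF where "OF = {i. i < n \<and> \<not>(\<exists>j. (i,j) \<in> A \<and> D y j = Some i)}"
  define Hit where "Hit = {i. i < n \<and> (\<exists>j\<in>B. D y j = Some i)}"
  have cfst: "card (fst ` A) = card A"
  proof (rule card_image, rule inj_onI)
    fix p q assume pq: "p \<in> A" "q \<in> A" "fst p = fst q"
    have "(fst p, snd p) \<in> A" "(fst q, snd q) \<in> A" using pq(1,2) by simp_all
    then have "(fst p = fst q) = (snd p = snd q)" by (rule inj)
    then show "p = q" using pq(3) by (metis prod_eq_iff)
  qed
  have csnd: "card (snd ` A) = card A"
  proof (rule card_image, rule inj_onI)
    fix p q assume pq: "p \<in> A" "q \<in> A" "snd p = snd q"
    have "(fst p, snd p) \<in> A" "(fst q, snd q) \<in> A" using pq(1,2) by simp_all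
    then have "(fst p = fst q) = (snd p = snd q)" by (rule inj)
    then show "p = q" using pq(3) by (metis prod_eq_iff)
  qed
  have cDel: "card Del = n - card A"
    unfolding Del_def using Asub cfst finA by (subst card_Diff_subset) auto
  have cIns: "card Ins = length R - card A"
    unfolding Ins_def using Asub csnd finA by (subst card_Diff_subset) auto
  have edits: "card Del + card Ins = num_edits (zip c S) R A"
    unfolding num_edits_def using cDel cIns lz by simp
  have BI: "B \<subseteq> Ins \<union> Mis" unfolding B_def Ins_def Mis_def by force
  have finB: "finite B" unfolding B_def by auto
  have finIns: "finite Ins" unfolding Ins_def by auto
  have cB: "card B \<le> card Ins + card Mis"
    by (meson BI card_Un_le card_mono finIns finMis finite_UnI order_trans)
  have "Hit \<subseteq> (\<lambda>j. the (D y j)) ` B" unfolding Hit_def by force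
  then have cHit: "card Hit \<le> card B" using finB by (meson card_image_le card_mono finite_imageI order_trans)
  have "OF \<subseteq> Del \<union> (\<lambda>j. THE i. (i,j) \<in> A) ` Mis"
  proof
    fix i assume "i \<in> OF"
    then have i: "i < n" "\<not>(\<exists>j. (i,j) \<in> A \<and> D y j = Some i)" unfolding OF_def by auto
    show "i \<in> Del \<union> (\<lambda>j. THE i. (i,j) \<in> A) ` Mis"
    proof (cases "i \<in> fst ` A")
      case False then show ?thesis using i unfolding Del_def by auto
    next
      case True
      then obtain j where ij: "(i,j) \<in> A" by force
      then have "j \<in> Mis" using i unfolding Mis_def by auto
      moreover have "(THE i. (i,j) \<in> A) = i" using ij inj by blast
      ultimately show ?thesis by force
    qed
  qed
  then have "card OF \<le> card (Del \<union> (\<lambda>j. THE i. (i,j) \<in> A) ` Mis)"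
    by (intro card_mono) (auto simp: Del_def finMis)
  also have "\<dots> \<le> card Del + card ((\<lambda>j. THE i. (i,j) \<in> A) ` Mis)" by (rule card_Un_le)
  also have "\<dots> \<le> card Del + card Mis" using card_image_le[OF finMis] by simp
  finally have cOF: "card OF \<le> card Del + card Mis" .
  define E where "E = {i. i < length c \<and> m ! i = None}"
  define W where "W = {i. i < length c \<and> m ! i \<noteq> None \<and> m ! i \<noteq> Some (c ! i)}"
  have hed: "half_error_distance c m = card E + 2 * card W"
    unfolding half_error_distance_def E_def W_def by simp
  have mi: "\<And>i. i < n \<Longrightarrow> m ! i = (let J = {j. j < length R \<and> D y j = Some i} in
               if card J = 1 then Some (fst (R ! (THE j. j \<in> J))) else None)"
    unfolding m_def indexing_receive_def y_def by simp
  have claimE: "E \<subseteq> OF \<union> Hit"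
  proof
    fix i assume "i \<in> E"
    then have i: "i < n" "m ! i = None" unfolding E_def using assms(3) by auto
    define J where "J = {j. j < length R \<and> D y j = Some i}"
    have cJ: "card J \<noteq> 1" using mi[OF i(1)] i(2) unfolding J_def Let_def by (auto split: if_splits)
    show "i \<in> OF \<union> Hit"
    proof (cases "i \<in> OF")
      case False
      then obtain j0 where j0: "(i,j0) \<in> A" "D y j0 = Some i" using i unfolding OF_def by auto
      have "j0 \<in> J" using j0 Asub unfolding J_def by auto
      moreover have "finite J" unfolding J_def by auto
      ultimately obtain j where j: "j \<in> J" "j \<noteq> j0"
      proof -
        assume h: "\<And>j. j \<in> J \<Longrightarrow> j \<noteq> j0 \<Longrightarrow> thesis"
        show thesis
        proof (rule ccontr)
          assume "\<not> thesis"
          then have "J = {j0}" using h \<open>j0 \<in> J\<close> by blast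
          then show False using cJ by simp
        qed
      qed
      have "j \<in> B"
      proof -
        have "\<not>(\<exists>i'. (i',j)\<in>A \<and> D y j = Some i')"
        proof
          assume "\<exists>i'. (i',j)\<in>A \<and> D y j = Some i'"
          then obtain i' where "(i',j)\<in>A" "D y j = Some i'" by blast
          moreover have "D y j = Some i" using j unfolding J_def by auto
          ultimately show False using inj j0(1) j(2) by auto
        qed
        then show ?thesis using j unfolding J_def B_def by auto
      qed
      then have "i \<in> Hit" using i j unfolding Hit_def J_def by auto
      then show ?thesis by simp
    qed simp
  qed
  have claimW: "W \<subseteq> OF \<inter> Hit"
  proof
    fix i assume "i \<in> W"
    then have i: "i < n" "m ! i \<noteq> None" "m ! i \<noteq> Some (c ! i)" unfolding W_def using assms(3) by auto
    define J where "J = {j. j < length R \<and> D y j = Some i}"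
    have cJ: "card J = 1" using mi[OF i(1)] i(2) unfolding J_def Let_def by (auto split: if_splits)
    then obtain j where Jj: "J = {j}" by (meson card_1_singletonE)
    have "(THE j. j \<in> J) = j" using Jj by simp
    then have fj: "fst (R ! j) \<noteq> c ! i" using mi[OF i(1)] i(3) cJ unfolding J_def Let_def by simp
    have jJ: "j < length R" "D y j = Some i" using Jj unfolding J_def by auto
    have nA: "(i,j) \<notin> A"
    proof
      assume "(i,j) \<in> A"
      then have "R ! j = zip c S ! i" by (rule Aeq)
      then show False using fj i(1) lS assms(3) by simp
    qed
    have "j \<in> B"
    proof -
      have "\<not>(\<exists>i'. (i',j)\<in>A \<and> D y j = Some i')" using nA jJ by auto
      then show ?thesis using jJ unfolding B_def by auto
    qed
    then have "i \<in> Hit" using i jJ unfolding Hit_def by auto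
    moreover have "i \<in> OF"
    proof -
      have "\<not>(\<exists>j0. (i,j0) \<in> A \<and> D y j0 = Some i)"
      proof
        assume "\<exists>j0. (i,j0) \<in> A \<and> D y j0 = Some i"
        then obtain j0 where "(i,j0) \<in> A" "D y j0 = Some i" by blast
        moreover then have "j0 < length R" using Asub by auto
        ultimately have "j0 \<in> J" unfolding J_def by auto
        then have "j0 = j" using Jj by auto
        then show False using nA \<open>(i,j0) \<in> A\<close> by simp
      qed
      then show ?thesis using i unfolding OF_def by auto
    qed
    ultimately show "i \<in> OF \<inter> Hit" by simp
  qed
  have finOF: "finite OF" unfolding OF_def by auto
  have finHit: "finite Hit" unfolding Hit_def by auto
  have disj: "E \<inter> W = {}" unfolding E_def W_def by auto
  have finE: "finite E" "finite W" unfolding E_def W_def by auto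
  have "card E + 2 * card W = card (E \<union> W) + card W"
    using card_Un_disjoint[OF finE disj] by simp
  also have "\<dots> \<le> card (OF \<union> Hit) + card (OF \<inter> Hit)"
    using claimE claimW by (intro add_mono card_mono) (auto simp: finOF finHit)
  also have "\<dots> = card OF + card Hit" using card_Un_Int[OF finOF finHit] by simp
  finally have main: "card E + 2 * card W \<le> card OF + card Hit" .
  have part1: "real (half_error_distance c m) \<le> real n * \<delta> + 2 * real k"
  proof -
    have "card E + 2 * card W \<le> (card Del + card Ins) + 2 * k"
      using main cOF cHit cB cMis by linarith
    then have "real (card E + 2 * card W) \<le> real (num_edits (zip c S) R A) + 2 * real k"
      using edits by simp
    then show ?thesis using hed bud by simp
  qed
  have part2: "error_free n \<delta> S D \<longrightarrow> real (half_error_distance c m) \<le> real n * \<delta> + real k"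
  proof
    assume ef: "error_free n \<delta> S D"
    have efy: "\<forall>j < length y. D y j \<noteq> None \<longrightarrow> (\<exists>i. (i, j) \<in> A \<and> D y j = Some i)"
      using ef corrS unfolding error_free_def by blast
    have "B = {}" using efy unfolding B_def y_def by auto
    then have "Hit = {}" unfolding Hit_def by auto
    then have "card Hit = 0" by simp
    then have "card E + 2 * card W \<le> card Del + card Ins + k"
      using main cOF cMis by linarith
    then have "real (card E + 2 * card W) \<le> real (num_edits (zip c S) R A) + real k"
      using edits by simp
    then show "real (half_error_distance c m) \<le> real n * \<delta> + real k" using hed bud by simp
  qed
  show ?thesis using part1 part2 m_def by simp
qed

end
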